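(* Let $\mathbf{S}=(1^{n_1},\ast^{m_1},\ldots,1^{n_r},\ast^{m_r})$ with $r\ge1$, all $n_j,m_j\ge1$ and $n_1+\cdots+n_r=m_1+\cdots+m_r=n$ (so $\mathbf{S}$ is a balanced string of length $2n$ with $r$ runs). Then \[ |NC_2(\mathbf{S})|\le\frac{r^{r-1}}{r!}(1+n)^{r-1}. \]
   Context: $1^k$ denotes $k$ consecutive entries $1$ (similarly $\ast^k$). $NC_2(\mathbf{S})$ is the set of non-crossing pairings of the $2n$ positions of $\mathbf{S}$ in which each pair joins a position carrying $1$ with a position carrying $\ast$. *)

theory Defs
  imports Complex_Main
begin

text \<open>Strings over the alphabet {1, *}: True encodes 1, False encodes *.\<close>

definition run_string :: "nat list \<Rightarrow> nat list \<Rightarrow> bool list" where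
  "run_string ns ms = concat (map2 (\<lambda>a b. replicate a True @ replicate b False) ns ms)"

definition NC2 :: "bool list \<Rightarrow> (nat \<times> nat) set set" where
  "NC2 S = {P. P \<subseteq> {(i, j). i < j \<and> j < length S}
              \<and> (\<forall>k < length S. \<exists>!p \<in> P. fst p = k \<or> snd p = k)
              \<and> (\<forall>(i, j) \<in> P. S ! i \<noteq> S ! j)
              \<and> (\<forall>(a, c) \<in> P. \<forall>(b, d) \<in> P. \<not> (a < b \<and> b < c \<and> c < d))}"

end

theory Submission
  imports Defs
begin

fun lc :: "bool list \<Rightarrow> nat" where
  "lc [] = 0" | "lc [a] = 0" | "lc (a # b # xs) = (if a = b then 0 else 1) + lc (b # xs)"

lemma lc_Cons: "lc (a # xs) = lc xs + (if xs \<noteq> [] \<and> a \<noteq> hd xs then 1 else 0)"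
  by (cases xs) auto

lemma lc_append: "lc (xs @ ys) = lc xs + lc ys + (if xs \<noteq> [] \<and> ys \<noteq> [] \<and> last xs \<noteq> hd ys then 1 else 0)"
  by (induction xs rule: lc.induct) (auto simp: lc_Cons)

lemma lc_replicate[simp]: "lc (replicate n x) = 0"
  by (induction n) (auto simp: lc_Cons)

definition ch :: "bool list \<Rightarrow> nat" where
  "ch w = lc w + (if w \<noteq> [] \<and> last w \<noteq> hd w then 1 else 0)"

lemma lc_hd_last: "xs \<noteq> [] \<Longrightarrow> (if hd xs \<noteq> last xs then 1 else 0) \<le> lc xs"
  by (induction xs rule: lc.induct) (auto simp: lc_Cons)

lemma lc_mem: "a \<in> set u \<Longrightarrow> (if hd u \<noteq> a then 1 else 0) + (if a \<noteq> last u then 1 else 0) \<le> lc u"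
proof -
  assume "a \<in> set u"
  then obtain xs ys where u: "u = xs @ a # ys" by (metis split_list)
  have 1: "xs \<noteq> [] \<Longrightarrow> (if hd xs \<noteq> last xs then 1 else 0) \<le> lc xs" by (rule lc_hd_last)
  have 2: "(if hd (a#ys) \<noteq> last (a#ys) then 1 else 0) \<le> lc (a#ys)" by (rule lc_hd_last) simp
  show ?thesis using 1 2 unfolding u lc_append
    by (cases "xs = []") (auto split: if_splits)
qed

lemma ch_ge2: "a \<in> set u \<Longrightarrow> b \<in> set u \<Longrightarrow> a \<noteq> b \<Longrightarrow> 2 \<le> ch u"
proof -
  assume ab: "a \<in> set u" "b \<in> set u" "a \<noteq> b"
  have "u \<noteq> []" using ab by auto
  show ?thesis
  proof (cases "hd u = a")
    case True
    then show ?thesis using lc_mem[OF ab(2)] ab(3) unfolding ch_def by (auto split: if_splits)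
  next
    case False
    then show ?thesis using lc_mem[OF ab(1)] ab(3) unfolding ch_def by (auto split: if_splits)
  qed
qed

lemma lc_card: "lc w = card {i. Suc i < length w \<and> w!i \<noteq> w!Suc i}"
proof (induction w rule: lc.induct)
  case (3 a b xs)
  let ?S = "\<lambda>w. {i. Suc i < length w \<and> w!i \<noteq> w!Suc i}"
  have e: "?S (a#b#xs) = (if a \<noteq> b then {0} else {}) \<union> Suc ` ?S (b#xs)"
    apply (rule set_eqI) subgoal for i by (cases i) auto done
  have "card (?S (a#b#xs)) = (if a \<noteq> b then 1 else 0) + card (?S (b#xs))"
    unfolding e by (auto simp: card_image)
  then show ?case using 3 by simp
qed auto

lemma ch_card: "ch w = card {i. i < length w \<and> w!i \<noteq> w!(Suc i mod length w)}"
proof (cases "w = []")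
  case True then show ?thesis by (simp add: ch_def)
next
  case False
  let ?L = "{i. Suc i < length w \<and> w!i \<noteq> w!Suc i}"
  have e: "{i. i < length w \<and> w!i \<noteq> w!(Suc i mod length w)} = ?L \<union> (if last w \<noteq> hd w then {length w - 1} else {})"
  proof (rule set_eqI)
    fix i
    show "i \<in> {i. i < length w \<and> w!i \<noteq> w!(Suc i mod length w)} \<longleftrightarrow> i \<in> ?L \<union> (if last w \<noteq> hd w then {length w - 1} else {})"
    proof (cases "Suc i < length w")
      case True then show ?thesis by auto
    next
      case F: False
      show ?thesis
      proof (cases "i = length w - 1")
        case True
        then have "Suc i = length w" using False by (cases w) auto
        then show ?thesis using True False F by (auto simp: last_conv_nth hd_conv_nth)
      next
        case c: False
        then show ?thesis using F by auto
      qed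
    qed
  qed
  have nin: "length w - 1 \<notin> ?L" by auto
  have fin: "finite ?L" by (rule finite_subset[of _ "{..<length w}"]) auto
  show ?thesis unfolding e ch_def lc_card using False nin fin by (auto simp: card_insert_disjoint)
qed

lemma NC2_sub: "NC2 w \<subseteq> Pow ({..<length w} \<times> {..<length w})"
  unfolding NC2_def by auto

lemma NC2_finite: "finite (NC2 w)"
  by (rule finite_subset[OF NC2_sub]) auto

lemma NC2D:
  assumes "P \<in> NC2 w"
  shows "\<And>i j. (i,j) \<in> P \<Longrightarrow> i < j \<and> j < length w"
    and "\<And>k. k < length w \<Longrightarrow> \<exists>!q\<in>P. fst q = k \<or> snd q = k"
    and "\<And>i j. (i,j) \<in> P \<Longrightarrow> w!i \<noteq> w!j"
    and "\<And>a b c d. (a,c) \<in> P \<Longrightarrow> (b,d) \<in> P \<Longrightarrow> \<not> (a < b \<and> b < c \<and> c < d)"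
proof -
  have A: "P \<subseteq> {(i, j). i < j \<and> j < length w}" and B: "\<forall>k < length w. \<exists>!p \<in> P. fst p = k \<or> snd p = k"
    and C: "\<forall>(i, j) \<in> P. w ! i \<noteq> w ! j"
    and D: "\<forall>(a, c) \<in> P. \<forall>(b, d) \<in> P. \<not> (a < b \<and> b < c \<and> c < d)"
    using assms unfolding NC2_def by blast+
  show "\<And>i j. (i,j) \<in> P \<Longrightarrow> i < j \<and> j < length w" using A by blast
  show "\<And>k. k < length w \<Longrightarrow> \<exists>!q\<in>P. fst q = k \<or> snd q = k" using B by blast
  show "\<And>i j. (i,j) \<in> P \<Longrightarrow> w!i \<noteq> w!j" using C by blast
  show "\<And>a b c d. (a,c) \<in> P \<Longrightarrow> (b,d) \<in> P \<Longrightarrow> \<not> (a < b \<and> b < c \<and> c < d)"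
    using D by blast
qed

lemma NC2I:
  assumes "\<And>i j. (i,j) \<in> P \<Longrightarrow> i < j \<and> j < length w"
    and "\<And>k. k < length w \<Longrightarrow> \<exists>!q\<in>P. fst q = k \<or> snd q = k"
    and "\<And>i j. (i,j) \<in> P \<Longrightarrow> w!i \<noteq> w!j"
    and "\<And>a b c d. (a,c) \<in> P \<Longrightarrow> (b,d) \<in> P \<Longrightarrow> \<not> (a < b \<and> b < c \<and> c < d)"
  shows "P \<in> NC2 w"
  unfolding NC2_def mem_Collect_eq
proof (intro conjI)
  show "P \<subseteq> {(i, j). i < j \<and> j < length w}" using assms(1) by auto
  show "\<forall>k < length w. \<exists>!p \<in> P. fst p = k \<or> snd p = k" using assms(2) by blast
  show "\<forall>(i, j) \<in> P. w ! i \<noteq> w ! j" using assms(3) by blast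
  show "\<forall>(a, c) \<in> P. \<forall>(b, d) \<in> P. \<not> (a < b \<and> b < c \<and> c < d)" using assms(4) by blast
qed

lemma NC2_unique:
  assumes "P \<in> NC2 w" "q \<in> P" "q' \<in> P" "fst q = k \<or> snd q = k" "fst q' = k \<or> snd q' = k"
  shows "q = q'"
proof -
  have "k < length w" using NC2D(1)[OF assms(1), of "fst q" "snd q"] assms(2,4) by auto
  then have "\<exists>!q\<in>P. fst q = k \<or> snd q = k" by (rule NC2D(2)[OF assms(1)])
  then show ?thesis using assms(2-5) by blast
qed

lemma NC2_Nil: "NC2 [] = {{}}"
  unfolding NC2_def by auto

lemma count_card: "count_list w a = card {i. i < length w \<and> w!i = a}"
  by (simp add: count_list_eq_length_filter length_filter_conv_card eq_commute)

lemma NC2_card_col: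
  assumes P: "P \<in> NC2 w"
  shows "card P = card {i. i < length w \<and> w!i = a}"
proof -
  define f where "f = (\<lambda>q. if w!(fst q) = a then fst q else snd q)"
  have "bij_betw f P {i. i < length w \<and> w!i = a}"
  proof (rule bij_betwI')
    fix q q' assume q: "q \<in> P" "q' \<in> P"
    show "(f q = f q') = (q = q')"
    proof
      assume "f q = f q'"
      then show "q = q'" using NC2_unique[OF P q] unfolding f_def by (auto split: if_splits)
    qed simp
  next
    fix q assume q: "q \<in> P"
    obtain i j where ij: "q = (i,j)" by force
    have "i < j" "j < length w" "w!i \<noteq> w!j" using NC2D(1,3)[OF P] q ij by auto
    then show "f q \<in> {i. i < length w \<and> w!i = a}" unfolding f_def ij by auto
  next
    fix k assume k: "k \<in> {i. i < length w \<and> w!i = a}"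
    then obtain q where q: "q \<in> P" "fst q = k \<or> snd q = k" using NC2D(2)[OF P] by blast
    obtain i j where ij: "q = (i,j)" by force
    have "w!i \<noteq> w!j" using NC2D(3)[OF P] q ij by auto
    then have "f q = k" using q k unfolding f_def ij by auto
    then show "\<exists>q\<in>P. k = f q" using q by auto
  qed
  then show ?thesis by (rule bij_betw_same_card)
qed

lemma NC2_bal: "P \<in> NC2 w \<Longrightarrow> count_list w a = count_list w b"
  using NC2_card_col[of P w a] NC2_card_col[of P w b] by (simp add: count_card)

lemma NC2_bal': "NC2 w \<noteq> {} \<Longrightarrow> count_list w a = count_list w b"
  using NC2_bal by blast

lemma NC2_nonconst:
  assumes "NC2 w \<noteq> {}" "w \<noteq> []"
  shows "\<exists>i<length w. w!i \<noteq> w!0"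
proof -
  obtain P where P: "P \<in> NC2 w" using assms by auto
  obtain q where q: "q \<in> P" "fst q = 0 \<or> snd q = 0" using NC2D(2)[OF P, of 0] assms by auto
  obtain i j where ij: "q = (i,j)" by force
  have "i < j" "j < length w" "w!i \<noteq> w!j" using NC2D(1,3)[OF P] q ij by auto
  then show ?thesis using q ij by auto
qed

definition restr :: "(nat \<Rightarrow> nat) \<Rightarrow> nat \<Rightarrow> (nat \<times> nat) set \<Rightarrow> (nat \<times> nat) set" where
  "restr h M P = {(m1, m2). m1 < M \<and> m2 < M \<and> (h m1, h m2) \<in> P}"

lemma restr_NC2:
  assumes P: "P \<in> NC2 w"
    and mono: "\<And>m1 m2. m1 < m2 \<Longrightarrow> m2 < M \<Longrightarrow> h m1 < h m2"
    and len: "length v = M"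
    and col: "\<And>m. m < M \<Longrightarrow> v!m = w!(h m)"
    and bnd: "\<And>m. m < M \<Longrightarrow> h m < length w"
    and closed: "\<And>i j. (i,j) \<in> P \<Longrightarrow> (i \<in> h ` {..<M} \<longleftrightarrow> j \<in> h ` {..<M})"
  shows "restr h M P \<in> NC2 v"
proof (rule NC2I)
  have inj: "\<And>m1 m2. m1 < M \<Longrightarrow> m2 < M \<Longrightarrow> h m1 = h m2 \<Longrightarrow> m1 = m2"
  proof (rule ccontr)
    fix m1 m2 assume a: "m1 < M" "m2 < M" "h m1 = h m2" "m1 \<noteq> m2"
    show False
    proof (cases "m1 < m2")
      case True then show False using mono[of m1 m2] a by simp
    next
      case False then have "m2 < m1" using a by simp
      then show False using mono[of m2 m1] a by simp
    qed
  qed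
  show "\<And>i j. (i,j) \<in> restr h M P \<Longrightarrow> i < j \<and> j < length v"
  proof -
    fix i j assume "(i,j) \<in> restr h M P"
    then have ij: "i < M" "j < M" "(h i, h j) \<in> P" unfolding restr_def by auto
    have "h i < h j" using NC2D(1)[OF P ij(3)] by auto
    have "i < j"
    proof (rule ccontr)
      assume "\<not> i < j"
      then have "j < i \<or> j = i" by auto
      then show False using mono[of j i] ij \<open>h i < h j\<close> by auto
    qed
    then show "i < j \<and> j < length v" using ij len by auto
  qed
  show "\<And>i j. (i,j) \<in> restr h M P \<Longrightarrow> v!i \<noteq> v!j"
    using NC2D(3)[OF P] col unfolding restr_def by auto
  show "\<And>a b c d. (a,c) \<in> restr h M P \<Longrightarrow> (b,d) \<in> restr h M P \<Longrightarrow> \<not> (a < b \<and> b < c \<and> c < d)"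
  proof
    fix a b c d assume "(a,c) \<in> restr h M P" "(b,d) \<in> restr h M P" "a < b \<and> b < c \<and> c < d"
    then have m: "(h a, h c) \<in> P" "(h b, h d) \<in> P" "a < b" "b < c" "c < d" "d < M"
      unfolding restr_def by auto
    have "h a < h b" "h b < h c" "h c < h d" using mono m by (meson less_trans)+
    note m = m this
    then show False using NC2D(4)[OF P m(1) m(2)] by blast
  qed
  show "\<And>k. k < length v \<Longrightarrow> \<exists>!q\<in>restr h M P. fst q = k \<or> snd q = k"
  proof -
    fix k assume k: "k < length v"
    then have kM: "k < M" using len by simp
    obtain q where q: "q \<in> P" "fst q = h k \<or> snd q = h k"
      using NC2D(2)[OF P bnd[OF kM]] by blast
    obtain i j where ij: "q = (i,j)" by force
    have ex: "\<exists>q\<in>restr h M P. fst q = k \<or> snd q = k"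
    proof (cases "i = h k")
      case True
      then have "j \<in> h ` {..<M}" using closed[of i j] q ij kM by auto
      then obtain m where "m < M" "j = h m" by auto
      then have "(k, m) \<in> restr h M P" using q ij True kM unfolding restr_def by auto
      then show ?thesis by force
    next
      case False
      then have jj: "j = h k" using q ij by auto
      then have "i \<in> h ` {..<M}" using closed[of i j] q ij kM by auto
      then obtain m where "m < M" "i = h m" by auto
      then have "(m, k) \<in> restr h M P" using q ij jj kM unfolding restr_def by auto
      then show ?thesis by force
    qed
    have un: "\<And>q1 q2. q1 \<in> restr h M P \<Longrightarrow> q2 \<in> restr h M P \<Longrightarrow> (fst q1 = k \<or> snd q1 = k) \<Longrightarrow> (fst q2 = k \<or> snd q2 = k) \<Longrightarrow> q1 = q2"
    proof -
      fix q1 q2 assume a: "q1 \<in> restr h M P" "q2 \<in> restr h M P" "fst q1 = k \<or> snd q1 = k" "fst q2 = k \<or> snd q2 = k"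
      obtain a1 b1 a2 b2 where e: "q1 = (a1,b1)" "q2 = (a2,b2)" by force
      have m: "a1 < M" "b1 < M" "(h a1, h b1) \<in> P" "a2 < M" "b2 < M" "(h a2, h b2) \<in> P"
        using a e unfolding restr_def by auto
      have "(h a1, h b1) = (h a2, h b2)"
        by (rule NC2_unique[OF P m(3) m(6), of "h k"]) (use a e in auto)
      then show "q1 = q2" using inj m e by auto
    qed
    show "\<exists>!q\<in>restr h M P. fst q = k \<or> snd q = k" using ex un by blast
  qed
qed

lemma restr_inj:
  assumes "restr h1 M1 P = restr h1 M1 P'" "restr h2 M2 P = restr h2 M2 P'"
    and "\<And>i j. (i,j) \<in> P \<Longrightarrow> (i,j) \<noteq> q0 \<Longrightarrow> (i \<in> h1 ` {..<M1} \<and> j \<in> h1 ` {..<M1}) \<or> (i \<in> h2 ` {..<M2} \<and> j \<in> h2 ` {..<M2})"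
    and "q0 \<in> P'"
  shows "P \<subseteq> P'"
proof
  fix q assume q: "q \<in> P"
  obtain i j where ij: "q = (i,j)" by force
  show "q \<in> P'"
  proof (cases "q = q0")
    case True then show ?thesis using assms(4) by simp
  next
    case False
    then have "(i \<in> h1 ` {..<M1} \<and> j \<in> h1 ` {..<M1}) \<or> (i \<in> h2 ` {..<M2} \<and> j \<in> h2 ` {..<M2})"
      using assms(3) q ij by auto
    then show ?thesis
    proof
      assume "i \<in> h1 ` {..<M1} \<and> j \<in> h1 ` {..<M1}"
      then obtain m1 m2 where m: "m1 < M1" "m2 < M1" "i = h1 m1" "j = h1 m2" by auto
      then have "(m1,m2) \<in> restr h1 M1 P" using q ij unfolding restr_def by auto
      then have "(m1,m2) \<in> restr h1 M1 P'" using assms(1) by simp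
      then show ?thesis using m ij unfolding restr_def by auto
    next
      assume "i \<in> h2 ` {..<M2} \<and> j \<in> h2 ` {..<M2}"
      then obtain m1 m2 where m: "m1 < M2" "m2 < M2" "i = h2 m1" "j = h2 m2" by auto
      then have "(m1,m2) \<in> restr h2 M2 P" using q ij unfolding restr_def by auto
      then have "(m1,m2) \<in> restr h2 M2 P'" using assms(2) by simp
      then show ?thesis using m ij unfolding restr_def by auto
    qed
  qed
qed

lemma separation:
  assumes P: "P \<in> NC2 w" and ab: "(a,b) \<in> P" and ij: "(i,j) \<in> P" "(i,j) \<noteq> (a,b)"
  shows "(a < i \<and> j < b) \<or> j < a \<or> b < i \<or> (i < a \<and> b < j)"
proof -
  have u: "\<And>k. (a = k \<or> b = k) \<Longrightarrow> (i = k \<or> j = k) \<Longrightarrow> False"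
  proof -
    fix k assume "a = k \<or> b = k" "i = k \<or> j = k"
    then have "(a,b) = (i,j)" using NC2_unique[OF P ab ij(1), of k] by simp
    then show False using ij(2) by simp
  qed
  have "i \<noteq> a" "i \<noteq> b" "j \<noteq> a" "j \<noteq> b" using u by blast+
  moreover have "i < j" "a < b" using NC2D(1)[OF P] ab ij by auto
  moreover have "\<not> (a < i \<and> i < b \<and> b < j)" using NC2D(4)[OF P ab ij(1)] by blast
  moreover have "\<not> (i < a \<and> a < j \<and> j < b)" using NC2D(4)[OF P ij(1) ab] by blast
  ultimately show ?thesis by linarith
qed

definition inner :: "bool list \<Rightarrow> nat \<Rightarrow> nat \<Rightarrow> bool list" where
  "inner w a b = take (b - Suc a) (drop (Suc a) w)"
definition outer :: "bool list \<Rightarrow> nat \<Rightarrow> nat \<Rightarrow> bool list" where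
  "outer w a b = take a w @ drop (Suc b) w"

lemma card_pairs:
  assumes ab: "a < b" "b < length w"
  shows "card {P \<in> NC2 w. (a,b) \<in> P} \<le> card (NC2 (inner w a b)) * card (NC2 (outer w a b))"
proof -
  define h1 where "h1 = (\<lambda>m. Suc a + m)"
  define M1 where "M1 = b - Suc a"
  define h2 where "h2 = (\<lambda>m. if m < a then m else m + (b - a) + 1)"
  define M2 where "M2 = length w - (b - a) - 1"
  have r1: "\<And>i. i \<in> h1 ` {..<M1} \<longleftrightarrow> a < i \<and> i < b"
  proof
    fix i assume "i \<in> h1 ` {..<M1}" then show "a < i \<and> i < b" unfolding h1_def M1_def by auto
  next
    fix i assume "a < i \<and> i < b"
    then have "i = h1 (i - Suc a)" "i - Suc a < M1" unfolding h1_def M1_def by auto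
    then show "i \<in> h1 ` {..<M1}" by blast
  qed
  have r2: "\<And>i. i \<in> h2 ` {..<M2} \<longleftrightarrow> i < length w \<and> (i < a \<or> b < i)"
  proof
    fix i assume "i \<in> h2 ` {..<M2}" then show "i < length w \<and> (i < a \<or> b < i)"
      unfolding h2_def M2_def using ab by (auto split: if_splits)
  next
    fix i assume i: "i < length w \<and> (i < a \<or> b < i)"
    show "i \<in> h2 ` {..<M2}"
    proof (cases "i < a")
      case True
      then have "i = h2 i" "i < M2" unfolding h2_def M2_def using i ab by auto
      then show ?thesis by blast
    next
      case False
      then have "i = h2 (i - (b - a) - 1)" "i - (b - a) - 1 < M2" unfolding h2_def M2_def using i ab by auto
      then show ?thesis by blast
    qed
  qed
  let ?A = "{P \<in> NC2 w. (a,b) \<in> P}"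
  define \<Phi> where "\<Phi> = (\<lambda>P. (restr h1 M1 P, restr h2 M2 P))"
  have sep: "\<And>P i j. P \<in> ?A \<Longrightarrow> (i,j) \<in> P \<Longrightarrow> (i,j) \<noteq> (a,b) \<Longrightarrow>
      (i \<in> h1 ` {..<M1} \<and> j \<in> h1 ` {..<M1}) \<or> (i \<in> h2 ` {..<M2} \<and> j \<in> h2 ` {..<M2})"
  proof -
    fix P i j assume a: "P \<in> ?A" "(i,j) \<in> P" "(i,j) \<noteq> (a,b)"
    have "i < j" "j < length w" using NC2D(1) a by auto
    then show "?thesis P i j" using separation[of P w a b i j] a unfolding r1 r2 by auto
  qed
  have inj: "inj_on \<Phi> ?A"
  proof (rule inj_onI)
    fix P P' assume a: "P \<in> ?A" "P' \<in> ?A" "\<Phi> P = \<Phi> P'"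
    show "P = P'"
    proof
      show "P \<subseteq> P'" by (rule restr_inj[of h1 M1 P P' h2 M2 "(a,b)"]) (use a sep \<Phi>_def in auto)
      show "P' \<subseteq> P" by (rule restr_inj[of h1 M1 P' P h2 M2 "(a,b)"]) (use a sep \<Phi>_def in auto)
    qed
  qed
  have maps: "\<Phi> ` ?A \<subseteq> NC2 (inner w a b) \<times> NC2 (outer w a b)"
  proof
    fix X assume "X \<in> \<Phi> ` ?A"
    then obtain P where P: "P \<in> ?A" "X = \<Phi> P" by auto
    have closed: "\<And>i j. (i,j) \<in> P \<Longrightarrow> (i \<in> h1 ` {..<M1} \<longleftrightarrow> j \<in> h1 ` {..<M1}) \<and> (i \<in> h2 ` {..<M2} \<longleftrightarrow> j \<in> h2 ` {..<M2})"
    proof -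
      fix i j assume ij: "(i,j) \<in> P"
      show "?thesis i j"
      proof (cases "(i,j) = (a,b)")
        case True then show ?thesis unfolding r1 r2 using ab by auto
      next
        case False
        have "i < j" "j < length w" using NC2D(1) P ij by auto
        then show ?thesis using separation[of P w a b i j] P ij False unfolding r1 r2 by auto
      qed
    qed
    have 1: "restr h1 M1 P \<in> NC2 (inner w a b)"
    proof (rule restr_NC2)
      show "P \<in> NC2 w" using P by simp
      show "\<And>m1 m2. m1 < m2 \<Longrightarrow> m2 < M1 \<Longrightarrow> h1 m1 < h1 m2" unfolding h1_def by simp
      show "length (inner w a b) = M1" unfolding inner_def M1_def using ab by simp
      show "\<And>m. m < M1 \<Longrightarrow> inner w a b ! m = w ! h1 m" unfolding inner_def M1_def h1_def using ab by simp
      show "\<And>m. m < M1 \<Longrightarrow> h1 m < length w" unfolding M1_def h1_def using ab by simp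
      show "\<And>i j. (i, j) \<in> P \<Longrightarrow> (i \<in> h1 ` {..<M1}) = (j \<in> h1 ` {..<M1})" using closed by blast
    qed
    have 2: "restr h2 M2 P \<in> NC2 (outer w a b)"
    proof (rule restr_NC2)
      show "P \<in> NC2 w" using P by simp
      show "\<And>m1 m2. m1 < m2 \<Longrightarrow> m2 < M2 \<Longrightarrow> h2 m1 < h2 m2" unfolding h2_def by simp
      show "length (outer w a b) = M2" unfolding outer_def M2_def using ab by simp
      show "\<And>m. m < M2 \<Longrightarrow> outer w a b ! m = w ! h2 m"
        unfolding outer_def M2_def h2_def using ab by (auto simp: nth_append ac_simps)
      show "\<And>m. m < M2 \<Longrightarrow> h2 m < length w" unfolding M2_def h2_def using ab by auto
      show "\<And>i j. (i, j) \<in> P \<Longrightarrow> (i \<in> h2 ` {..<M2}) = (j \<in> h2 ` {..<M2})" using closed by blast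
    qed
    show "X \<in> NC2 (inner w a b) \<times> NC2 (outer w a b)" using 1 2 P \<Phi>_def by simp
  qed
  have "card ?A \<le> card (NC2 (inner w a b) \<times> NC2 (outer w a b))"
    by (rule card_inj_on_le[OF inj maps]) (simp add: NC2_finite)
  then show ?thesis by (simp add: card_cartesian_product)
qed

lemma ch_rot: "ch (xs @ ys) = ch (ys @ xs)"
  unfolding ch_def lc_append by (cases "xs = []"; cases "ys = []") auto

lemma ch_app_ge: "ch L \<le> ch (L @ M)"
proof (cases "L = [] \<or> M = []")
  case True then show ?thesis by (auto simp: ch_def)
next
  case False
  have "(if hd M \<noteq> last M then 1 else 0) \<le> lc M" using lc_hd_last False by auto
  then show ?thesis using False unfolding ch_def lc_append by (auto split: if_splits)
qed

lemma ch_del: "ch (A @ Z) \<le> ch (A @ M @ Z)"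
proof -
  have "ch (A @ Z) = ch (Z @ A)" by (rule ch_rot)
  also have "\<dots> \<le> ch ((Z @ A) @ M)" by (rule ch_app_ge)
  also have "\<dots> = ch (A @ M @ Z)" using ch_rot[of Z "A @ M"] by simp
  finally show ?thesis .
qed

lemma ch_split1:
  assumes "p \<ge> 1" "x \<noteq> y"
  shows "ch (replicate p x @ y # I @ x # Z) = ch (replicate p x @ Z) + 1
     + (if y \<noteq> hd (I @ x # Z) then 1 else 0) + lc I + (if I \<noteq> [] \<and> last I \<noteq> x then 1 else 0)"
proof -
  obtain q where q: "p = Suc q" using assms by (cases p) auto
  have "replicate p x = x # replicate q x" using q by simp
  show ?thesis using assms unfolding ch_def lc_append lc_Cons q
    by (cases Z; cases I) (auto simp: lc_append lc_Cons)
qed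

lemma decomp:
  assumes "a < b" "b < length w"
  shows "w = take a w @ w!a # inner w a b @ w!b # drop (Suc b) w"
proof -
  have 1: "w = take a w @ w!a # drop (Suc a) w" using assms by (simp add: id_take_nth_drop)
  have "drop (Suc a) w = take (b - Suc a) (drop (Suc a) w) @ drop (b - Suc a) (drop (Suc a) w)"
    by (rule append_take_drop_id[symmetric])
  also have "drop (b - Suc a) (drop (Suc a) w) = drop b w" using assms by simp
  also have "drop b w = w!b # drop (Suc b) w" using assms by (simp add: Cons_nth_drop_Suc)
  finally show ?thesis using 1 unfolding inner_def by simp
qed

lemma take_const:
  assumes "\<And>i. i < p \<Longrightarrow> w!i = x" "p \<le> length w"
  shows "take p w = replicate p x"
  using assms by (intro nth_equalityI) auto

definition lastb :: "(nat \<Rightarrow> bool) \<Rightarrow> nat \<Rightarrow> nat" where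
  "lastb P k = Max {j. j < k \<and> P j}"

lemma lastb:
  assumes "j0 < k" "P j0"
  shows "j0 \<le> lastb P k" "lastb P k < k" "P (lastb P k)" "\<And>i. lastb P k < i \<Longrightarrow> i < k \<Longrightarrow> \<not> P i"
proof -
  have fin: "finite {j. j < k \<and> P j}" by auto
  have ne: "j0 \<in> {j. j < k \<and> P j}" using assms by auto
  have "lastb P k \<in> {j. j < k \<and> P j}" unfolding lastb_def using Max_in[OF fin] ne by blast
  then show "lastb P k < k" "P (lastb P k)" by auto
  show "j0 \<le> lastb P k" unfolding lastb_def using Max_ge[OF fin ne] .
  fix i assume a: "lastb P k < i" "i < k"
  show "\<not> P i"
  proof
    assume "P i"
    then have "i \<le> Max {j. j < k \<and> P j}" by (intro Max_ge[OF fin]) (use a in auto)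
    then show False using a unfolding lastb_def by simp
  qed
qed

lemma count_replicate: "count_list (replicate n a) b = (if a = b then n else 0)"
  by (induction n) auto

lemma count_all:
  assumes "\<And>z. z \<in> set L \<Longrightarrow> z = a"
  shows "count_list L a = length L"
  using assms by (induction L) auto

lemma count_V:
  fixes w :: "bool list" and x y :: bool
  assumes x: "w!0 = x" and p: "p < length w" "1 \<le> p" "w!p = y" and xy: "x \<noteq> y"
    and pre: "\<And>i. i < p \<Longrightarrow> w!i = x"
    and bal: "count_list w x = count_list w y"
    and V: "V \<subseteq> {k. p < k \<and> k < length w \<and> w!k = x \<and> count_list (inner w p k) x = count_list (inner w p k) y}"
  shows "2 * card V + 2 \<le> ch w"
proof -
  define N where "N = length w"
  have other: "\<And>z. z \<noteq> y \<longleftrightarrow> z = x" using xy by auto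
  have finV: "finite V" using V by (rule finite_subset) auto
  have after: "\<And>k. k \<in> V \<Longrightarrow> \<exists>m. k < m \<and> m < N \<and> w!m = y"
  proof -
    fix k assume k: "k \<in> V"
    then have kk: "p < k" "k < N" "w!k = x" "count_list (inner w p k) x = count_list (inner w p k) y"
      using V N_def by auto
    define Z where "Z = drop (Suc k) w"
    have w: "w = replicate p x @ y # inner w p k @ x # Z"
      using decomp[of p k w] kk take_const[of p w x] pre p unfolding N_def Z_def by simp
    have "count_list (replicate p x @ y # inner w p k @ x # Z) x = p + count_list (inner w p k) x + 1 + count_list Z x"
      using xy by (cases x; cases y) (auto simp: count_replicate)
    moreover have "count_list (replicate p x @ y # inner w p k @ x # Z) y = 1 + count_list (inner w p k) y + count_list Z y"
      using xy by (cases x; cases y) (auto simp: count_replicate)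
    ultimately have "count_list w x = p + count_list (inner w p k) x + 1 + count_list Z x"
      "count_list w y = 1 + count_list (inner w p k) y + count_list Z y" using w by simp_all
    then have "count_list Z y > 0" using bal kk(4) p(2) by simp
    then have "y \<in> set Z"
    proof (rule contrapos_pp)
      assume "y \<notin> set Z" then show "\<not> count_list Z y > 0" by simp
    qed
    then obtain i where i: "i < length Z" "Z!i = y" by (auto simp: in_set_conv_nth)
    then show "\<exists>m. k < m \<and> m < N \<and> w!m = y" unfolding Z_def N_def
      by (intro exI[of _ "Suc k + i"]) auto
  qed
  define jf where "jf = (\<lambda>k. lastb (\<lambda>j. w!j = y) k)"
  have jfp: "\<And>k. k \<in> V \<Longrightarrow> p \<le> jf k \<and> jf k < k \<and> w!(jf k) = y \<and> (\<forall>m. jf k < m \<and> m \<le> k \<longrightarrow> w!m = x)"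
  proof -
    fix k assume k: "k \<in> V"
    then have kk: "p < k" "w!k = x" using V by auto
    note l = lastb[of p k "\<lambda>j. w!j = y", OF kk(1) p(3)]
    have "\<forall>m. jf k < m \<and> m \<le> k \<longrightarrow> w!m = x"
    proof (intro allI impI)
      fix m assume m: "jf k < m \<and> m \<le> k"
      show "w!m = x"
      proof (cases "m = k")
        case True then show ?thesis using kk by simp
      next
        case False then have "m < k" using m by simp
        then show ?thesis using l(4)[of m] m other unfolding jf_def by blast
      qed
    qed
    then show "?thesis k" unfolding jf_def using l by blast
  qed
  have jf_inj: "inj_on jf V"
  proof -
    have key: "\<And>k k'. k \<in> V \<Longrightarrow> k' \<in> V \<Longrightarrow> k < k' \<Longrightarrow> jf k = jf k' \<Longrightarrow> False"
    proof -
      fix k k' assume a: "k \<in> V" "k' \<in> V" "k < k'" "jf k = jf k'"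
      have allx: "\<And>m. k \<le> m \<Longrightarrow> m < k' \<Longrightarrow> w!m = x"
      proof -
        fix m assume m: "k \<le> m" "m < k'"
        have "jf k < k" using jfp[OF a(1)] by blast
        then have "jf k' < m \<and> m \<le> k'" using m a(4) by simp
        then show "w!m = x" using jfp[OF a(2)] by blast
      qed
      have kk: "p < k" "k' < length w" "count_list (inner w p k) x = count_list (inner w p k) y"
        "count_list (inner w p k') x = count_list (inner w p k') y" using a V by auto
      define L where "L = take (k' - k) (drop k w)"
      have "inner w p k' = inner w p k @ L"
      proof -
        have "k' - Suc p = (k - Suc p) + (k' - k)" using kk a by simp
        then have "inner w p k' = take (k - Suc p) (drop (Suc p) w) @ take (k' - k) (drop (k - Suc p) (drop (Suc p) w))"
          unfolding inner_def by (simp add: take_add)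
        also have "drop (k - Suc p) (drop (Suc p) w) = drop k w" using kk by simp
        finally show ?thesis unfolding inner_def L_def .
      qed
      moreover have "\<And>z. z \<in> set L \<Longrightarrow> z = x"
      proof -
        fix z assume "z \<in> set L"
        then obtain i where "i < length L" "L!i = z" by (auto simp: in_set_conv_nth)
        then show "z = x" unfolding L_def using allx[of "k + i"] kk by auto
      qed
      moreover have "length L > 0" unfolding L_def using a kk by simp
      ultimately show False using kk count_all[of L x] count_notin[of y L] xy by force
    qed
    show ?thesis
    proof (rule inj_onI)
      fix k k' assume "k \<in> V" "k' \<in> V" "jf k = jf k'"
      then show "k = k'" using key[of k k'] key[of k' k] by (cases k k' rule: linorder_cases) auto
    qed
  qed
  define q where "q = lastb (\<lambda>j. w!j = y) N"
  note lq = lastb[of p N "\<lambda>j. w!j = y", folded q_def, OF p(1)[folded N_def] p(3)]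
  have qp: "p \<le> q" "q < N" "w!q = y" "\<And>i. q < i \<Longrightarrow> i < N \<Longrightarrow> w!i = x" using lq other by auto
  have kq: "\<And>k. k \<in> V \<Longrightarrow> k < q"
  proof -
    fix k assume "k \<in> V"
    then obtain m where m: "k < m" "m < N" "w!m = y" using after by blast
    have "\<not> q < m"
    proof
      assume "q < m" then have "w!m = x" using qp(4) m by blast
      then show False using m xy by simp
    qed
    then show "k < q" using m by simp
  qed
  define CS where "CS = {i. i < N \<and> w!i \<noteq> w!(Suc i mod N)}"
  define Dn where "Dn = {i \<in> CS. w!i = y}"
  define Up where "Up = {i \<in> CS. w!i = x}"
  have finCS: "finite CS" unfolding CS_def by auto
  have CSeq: "CS = Dn \<union> Up" "Dn \<inter> Up = {}" unfolding Dn_def Up_def using other xy by auto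
  have chw: "ch w = card Dn + card Up"
  proof -
    have "finite Dn" "finite Up" using finCS CSeq by auto
    then have "card CS = card Dn + card Up" using CSeq card_Un_disjoint by metis
    moreover have "ch w = card CS" unfolding CS_def N_def by (rule ch_card)
    ultimately show ?thesis by simp
  qed
  have jfD: "\<And>k. k \<in> V \<Longrightarrow> jf k \<in> Dn"
  proof -
    fix k assume k: "k \<in> V"
    have "Suc (jf k) < N" "w!(Suc (jf k)) = x" using jfp[OF k] k V N_def by auto
    then show "jf k \<in> Dn" unfolding Dn_def CS_def using jfp[OF k] xy by auto
  qed
  have qD: "q \<in> Dn"
  proof (cases "Suc q < N")
    case True
    then show ?thesis unfolding Dn_def CS_def using qp xy by auto
  next
    case False
    then have "Suc q = N" using qp by simp
    then show ?thesis unfolding Dn_def CS_def using qp xy x by auto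
  qed
  have qnot: "q \<notin> jf ` V"
  proof
    assume "q \<in> jf ` V"
    then obtain k where k: "k \<in> V" "q = jf k" by blast
    then show False using kq[OF k(1)] jfp[OF k(1)] by simp
  qed
  have "card (insert q (jf ` V)) \<le> card Dn"
    by (rule card_mono) (use finCS Dn_def jfD qD in auto)
  then have cD: "card V + 1 \<le> card Dn"
    using qnot card_image[OF jf_inj] finV by simp
  define ifn where "ifn = (\<lambda>k. lastb (\<lambda>j. w!j = x) (jf k))"
  have ifp: "\<And>k. k \<in> V \<Longrightarrow> ifn k < jf k \<and> w!(ifn k) = x \<and> (\<forall>m. ifn k < m \<and> m \<le> jf k \<longrightarrow> w!m = y)"
  proof -
    fix k assume k: "k \<in> V"
    have a: "p - 1 < jf k" "w!(p-1) = x" using jfp[OF k] pre p by auto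
    note l = lastb[of "p-1" "jf k" "\<lambda>j. w!j = x", OF a]
    have "\<forall>m. ifn k < m \<and> m \<le> jf k \<longrightarrow> w!m = y"
    proof (intro allI impI)
      fix m assume m: "ifn k < m \<and> m \<le> jf k"
      show "w!m = y"
      proof (cases "m = jf k")
        case True then show ?thesis using jfp[OF k] by simp
      next
        case False then have "m < jf k" using m by simp
        then show ?thesis using l(4)[of m] m other unfolding ifn_def by blast
      qed
    qed
    then show "?thesis k" unfolding ifn_def using l by blast
  qed
  have ifU: "\<And>k. k \<in> V \<Longrightarrow> ifn k \<in> Up"
  proof -
    fix k assume k: "k \<in> V"
    have "Suc (ifn k) < N" "w!(Suc (ifn k)) = y" using ifp[OF k] jfp[OF k] k V N_def by auto
    then show "ifn k \<in> Up" unfolding Up_def CS_def using ifp[OF k] xy by auto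
  qed
  have if_inj: "inj_on ifn V"
  proof -
    have key: "\<And>k k'. k \<in> V \<Longrightarrow> k' \<in> V \<Longrightarrow> jf k < jf k' \<Longrightarrow> ifn k = ifn k' \<Longrightarrow> False"
    proof -
      fix k k' assume a: "k \<in> V" "k' \<in> V" "jf k < jf k'" "ifn k = ifn k'"
      have "w!(Suc (jf k)) = x" using jfp[OF a(1)] by auto
      moreover have "w!(Suc (jf k)) = y" using ifp[OF a(2)] ifp[OF a(1)] a by auto
      ultimately show False using xy by simp
    qed
    show ?thesis
    proof (rule inj_onI)
      fix k k' assume a: "k \<in> V" "k' \<in> V" "ifn k = ifn k'"
      then have "jf k = jf k'" using key[of k k'] key[of k' k] by (cases "jf k" "jf k'" rule: linorder_cases) auto
      then show "k = k'" using jf_inj a by (meson inj_onD)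
    qed
  qed
  define iq where "iq = lastb (\<lambda>j. w!j = x) q"
  have "0 < q" using qp p by simp
  note liq = lastb[of 0 q "\<lambda>j. w!j = x", folded iq_def, OF this x]
  have iqU: "iq \<in> Up"
  proof -
    have "Suc iq < N" using liq qp by simp
    have "w!(Suc iq) = y"
    proof (cases "Suc iq = q")
      case True then show ?thesis using qp by simp
    next
      case False then have "Suc iq < q" using liq by simp
      then show ?thesis using liq(4)[of "Suc iq"] other xy by auto
    qed
    note this \<open>Suc iq < N\<close>
    then show ?thesis unfolding Up_def CS_def using liq xy by auto
  qed
  have iqnot: "iq \<notin> ifn ` V"
  proof
    assume "iq \<in> ifn ` V"
    then obtain k where k: "k \<in> V" "iq = ifn k" by auto
    have "k < q" "w!k = x" using kq k V by auto
    have "k \<le> iq"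
    proof (rule ccontr)
      assume "\<not> k \<le> iq" then have "iq < k" by simp
      then show False using liq(4)[of k] \<open>k < q\<close> \<open>w!k = x\<close> by simp
    qed
    then show False using ifp[OF k(1)] jfp[OF k(1)] k by simp
  qed
  have "card (insert iq (ifn ` V)) \<le> card Up"
    by (rule card_mono) (use finCS Up_def ifU iqU in auto)
  then have cU: "card V + 1 \<le> card Up"
    using iqnot card_image[OF if_inj] finV by simp
  show ?thesis using cD cU chw by simp
qed

lemma count_sum: "count_list w True + count_list w False = length w"
  by (induction w) auto

lemma NC2_len: "NC2 u \<noteq> {} \<Longrightarrow> length u = 2 * count_list u a"
  using count_sum[of u] NC2_bal'[of u True False] NC2_bal'[of u a True] by simp

lemma both_in:
  fixes u :: "bool list"
  assumes "NC2 u \<noteq> {}" "u \<noteq> []"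
  shows "True \<in> set u" "False \<in> set u"
proof -
  have "length u > 0" using assms by simp
  then have "count_list u True > 0" "count_list u False > 0" using NC2_len[OF assms(1)] by (metis mult_0_right neq0_conv)+
  then show "True \<in> set u" "False \<in> set u" by (metis count_notin less_irrefl)+
qed

lemma ch_NC2_ge2: "NC2 u \<noteq> {} \<Longrightarrow> u \<noteq> [] \<Longrightarrow> 2 \<le> ch u"
  using both_in ch_ge2[of True u False] by blast

lemma pow_ineq: "(n::nat) ^ f + f * n ^ (f - 1) \<le> (n + 1) ^ f"
proof (induction f)
  case 0 then show ?case by simp
next
  case (Suc f)
  have h: "f * n ^ f = f * (n * n ^ (f - 1))" by (cases f) auto
  have "n ^ Suc f + Suc f * n ^ (Suc f - 1) = n * n ^ f + n ^ f + f * n ^ f" by simp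
  also have "\<dots> = n * n ^ f + n ^ f + n * (f * n ^ (f - 1))" unfolding h by (simp add: algebra_simps)
  also have "\<dots> \<le> (n + 1) * (n ^ f + f * n ^ (f - 1))" by (simp add: algebra_simps)
  also have "\<dots> \<le> (n + 1) * (n + 1) ^ f" using Suc by (intro mult_le_mono) auto
  finally show ?case by simp
qed

lemma div2_add: "(a::nat) + b \<le> c \<Longrightarrow> a div 2 + b div 2 \<le> c div 2"
proof -
  assume h: "a + b \<le> c"
  have "(a div 2 + b div 2) * 2 \<le> c" using h by (simp add: algebra_simps)
  then have "((a div 2 + b div 2) * 2) div 2 \<le> c div 2" by (rule div_le_mono)
  then show ?thesis by simp
qed
lemma exp_arith: "(2::nat) \<le> a \<Longrightarrow> 2 \<le> b \<Longrightarrow> a + b \<le> c \<Longrightarrow> (a div 2 - 1) + (b div 2 - 1) \<le> c div 2 - 1 - 1"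
proof -
  assume h: "2 \<le> a" "2 \<le> b" "a + b \<le> c"
  have "1 \<le> a div 2" "1 \<le> b div 2" using div_le_mono[OF h(1), of 2] div_le_mono[OF h(2), of 2] by simp_all
  moreover have "a div 2 + b div 2 \<le> c div 2" using div2_add[OF h(3)] .
  ultimately show ?thesis by linarith
qed
lemma exp_arith2: "(b::nat) + 2 \<le> c \<Longrightarrow> b div 2 - 1 \<le> c div 2 - 1 - 1"
proof -
  assume h: "b + 2 \<le> c"
  have "b div 2 + 2 div 2 \<le> c div 2" using div2_add[OF h] .
  then show ?thesis by linarith
qed

lemma main: "card (NC2 w) \<le> (length w div 2 + 1) ^ (ch w div 2 - 1)"
proof (induction "length w" arbitrary: w rule: less_induct)
  case less
  note IH = less.hyps
  show ?case
  proof (cases "NC2 w = {}")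
    case True then show ?thesis by simp
  next
    case ne: False
    show ?thesis
    proof (cases "w = []")
      case True then show ?thesis by (simp add: NC2_Nil ch_def)
    next
      case wne: False
      define N where "N = length w"
      define x where "x = w!0"
      define n where "n = N div 2"
      have Nn: "N = 2 * n" using NC2_len[OF ne, of True] unfolding n_def N_def by simp
      have n1: "1 \<le> n" using Nn wne unfolding N_def by (cases n) auto
      have balw: "count_list w x = count_list w (\<not> x)" using NC2_bal'[OF ne] by blast
      obtain i0 where "i0 < N" "w!i0 \<noteq> x" using NC2_nonconst[OF ne wne] unfolding N_def x_def by blast
      define p where "p = (LEAST i. i < N \<and> w!i \<noteq> x)"
      have pl: "p < N \<and> w!p \<noteq> x" unfolding p_def
        by (rule LeastI[of "\<lambda>i. i < N \<and> w!i \<noteq> x" i0]) (use \<open>i0 < N\<close> \<open>w!i0 \<noteq> x\<close> in auto)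
      have pre: "\<And>i. i < p \<Longrightarrow> w!i = x"
      proof -
        fix i assume i: "i < p"
        then have "\<not> (i < N \<and> w!i \<noteq> x)" unfolding p_def by (rule not_less_Least)
        then show "w!i = x" using i pl by simp
      qed
      have p1: "1 \<le> p" using pl x_def by (cases p) auto
      define y where "y = w!p"
      have xy: "x \<noteq> y" using pl y_def by simp
      have yx: "y = (\<not> x)" using xy by auto
      define f where "f = ch w div 2 - 1"
      define A where "A = (\<lambda>k. {P \<in> NC2 w. (min k p, max k p) \<in> P})"
      define K where "K = {..<N} - {p}"
      define V where "V = {k. p < k \<and> k < N \<and> w!k = x \<and> NC2 (inner w p k) \<noteq> {} \<and> NC2 (outer w p k) \<noteq> {}}"
      define T where "T = (\<lambda>k. (if k = p - 1 then n ^ f else 0) + (if k \<in> V then n ^ (f - 1) else 0))"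
      have cover: "NC2 w \<subseteq> (\<Union>k\<in>K. A k)"
      proof
        fix P assume P: "P \<in> NC2 w"
        obtain q where q: "q \<in> P" "fst q = p \<or> snd q = p" using NC2D(2)[OF P, of p] pl N_def by blast
        obtain i j where ij: "q = (i,j)" by force
        have "i < j" "j < N" using NC2D(1)[OF P] q ij N_def by auto
        show "P \<in> (\<Union>k\<in>K. A k)"
        proof (cases "i = p")
          case True
          then have "j \<in> K" "P \<in> A j" using \<open>i<j\<close> \<open>j<N\<close> q ij P unfolding K_def A_def by auto
          then show ?thesis by blast
        next
          case False
          then have "j = p" using q ij by auto
          then have "i \<in> K" "P \<in> A i" using \<open>i<j\<close> \<open>j<N\<close> q ij P unfolding K_def A_def by auto
          then show ?thesis by blast
        qed
      qed
      have finA: "\<And>k. finite (A k)" unfolding A_def using NC2_finite by auto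
      have Tk: "\<And>k. k \<in> K \<Longrightarrow> card (A k) \<le> T k"
      proof -
        fix k assume k: "k \<in> K"
        show "card (A k) \<le> T k"
        proof (cases "k < p")
          case kp: True
          then have Ak: "card (A k) \<le> card (NC2 (inner w k p)) * card (NC2 (outer w k p))"
            using card_pairs[of k p w] pl N_def unfolding A_def by simp
          show ?thesis
          proof (cases "k = p - 1")
            case False
            then have "k < p - 1" using kp by simp
            define I where "I = inner w k p"
            have "I \<noteq> []" "\<And>z. z \<in> set I \<Longrightarrow> z = x"
            proof -
              show "I \<noteq> []" unfolding I_def inner_def using \<open>k < p - 1\<close> pl N_def by (simp, linarith)
              fix z assume "z \<in> set I"
              then obtain i where "i < length I" "I!i = z" by (auto simp: in_set_conv_nth)
              then show "z = x" unfolding I_def inner_def using pre[of "Suc k + i"] pl N_def by auto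
            qed
            then have "count_list I x \<noteq> count_list I y"
              using count_all[of I x] count_notin[of y I] xy by force
            then have "NC2 I = {}" using NC2_bal' by blast
            then show ?thesis using Ak unfolding I_def by simp
          next
            case True
            define Ou where "Ou = outer w k p"
            have inn: "inner w k p = []" unfolding inner_def using True by simp
            have lenO: "length Ou = N - 2" unfolding Ou_def outer_def using True pl p1 N_def by (simp, linarith)
            have "ch Ou \<le> ch w"
            proof -
              have "w = take k w @ [w!k, w!p] @ drop (Suc p) w"
                using decomp[of k p w] kp pl N_def inn by simp
              then show ?thesis unfolding Ou_def outer_def using ch_del[of "take k w" "drop (Suc p) w" "[w!k, w!p]"]
                by simp
            qed
            then have e: "ch Ou div 2 - 1 \<le> f" unfolding f_def by (simp add: div_le_mono)
            have "card (NC2 Ou) \<le> (length Ou div 2 + 1) ^ (ch Ou div 2 - 1)"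
              using IH[of Ou] lenO wne N_def by simp
            also have "length Ou div 2 + 1 = n" using lenO Nn n1 by simp
            also have "n ^ (ch Ou div 2 - 1) \<le> n ^ f" using e n1 by (simp add: power_increasing)
            finally have "card (NC2 Ou) \<le> n ^ f" .
            then show ?thesis using Ak unfolding Ou_def T_def using inn True by (simp add: NC2_Nil)
          qed
        next
          case kp: False
          then have kp: "p < k" "k < N" using k K_def by auto
          have Ak: "card (A k) \<le> card (NC2 (inner w p k)) * card (NC2 (outer w p k))"
            using card_pairs[of p k w] kp N_def unfolding A_def by simp
          show ?thesis
          proof (cases "k \<in> V")
            case False
            show ?thesis
            proof (cases "w!k = x")
              case True
              then have "NC2 (inner w p k) = {} \<or> NC2 (outer w p k) = {}" using False kp V_def by auto
              then show ?thesis using Ak by auto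
            next
              case wk: False
              have "A k = {}"
              proof (rule ccontr)
                assume "A k \<noteq> {}"
                then obtain P where "P \<in> NC2 w" "(p, k) \<in> P" unfolding A_def using kp by auto
                then have "w!p \<noteq> w!k" using NC2D(3) by blast
                then show False using wk pl by simp
              qed
              then show ?thesis by simp
            qed
          next
            case kV: True
            define I where "I = inner w p k"
            define Ou where "Ou = outer w p k"
            define Z where "Z = drop (Suc k) w"
            have neI: "NC2 I \<noteq> {}" and neO: "NC2 Ou \<noteq> {}" and wk: "w!k = x" using kV unfolding V_def I_def Ou_def by auto
            have w: "w = replicate p x @ y # I @ x # Z"
              using decomp[of p k w] kp take_const[of p w x] pre pl wk unfolding N_def Z_def I_def y_def by simp
            have Oe: "Ou = replicate p x @ Z"
              unfolding Ou_def outer_def Z_def using take_const[of p w x] pre pl N_def by simp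
            have lens: "length I + length Ou + 2 = N"
              unfolding I_def Ou_def inner_def outer_def using kp N_def by simp
            have evI: "length I = 2 * count_list I True" using NC2_len[OF neI] .
            have evO: "length Ou = 2 * count_list Ou True" using NC2_len[OF neO] .
            have bI: "length I div 2 + 1 \<le> n" and bO: "length Ou div 2 + 1 \<le> n"
              using lens evI evO Nn by linarith+
            have cI: "card (NC2 I) \<le> (length I div 2 + 1) ^ (ch I div 2 - 1)"
              using IH[of I] lens N_def by simp
            have cO: "card (NC2 Ou) \<le> (length Ou div 2 + 1) ^ (ch Ou div 2 - 1)"
              using IH[of Ou] lens N_def by simp
            have sp: "ch w = ch Ou + 1 + (if y \<noteq> hd (I @ x # Z) then 1 else 0) + lc I + (if I \<noteq> [] \<and> last I \<noteq> x then 1 else 0)"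
              using ch_split1[OF p1 xy, of I Z] w Oe by simp
            have ex: "(ch I div 2 - 1) + (ch Ou div 2 - 1) \<le> f - 1"
            proof (cases "I = []")
              case True
              then have "ch Ou + 2 \<le> ch w" using sp xy by simp
              then show ?thesis unfolding f_def using True exp_arith2 by (simp add: ch_def)
            next
              case False
              have "ch I \<le> lc I + 1 + (if y \<noteq> hd I then 1 else 0) + (if last I \<noteq> x then 1 else 0)"
                unfolding ch_def using False xy by auto
              then have "ch I + ch Ou \<le> ch w" using sp False by simp
              moreover have "2 \<le> ch I" using ch_NC2_ge2[OF neI False] .
              moreover have "2 \<le> ch Ou" using ch_NC2_ge2[OF neO] Oe p1 by (cases p) auto
              ultimately show ?thesis unfolding f_def using exp_arith by blast
            qed
            have "card (A k) \<le> card (NC2 I) * card (NC2 Ou)" using Ak I_def Ou_def by simp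
            also have "\<dots> \<le> (length I div 2 + 1) ^ (ch I div 2 - 1) * (length Ou div 2 + 1) ^ (ch Ou div 2 - 1)"
              using cI cO by (rule mult_le_mono)
            also have "\<dots> \<le> n ^ (ch I div 2 - 1) * n ^ (ch Ou div 2 - 1)"
              using bI bO by (intro mult_le_mono power_mono) auto
            also have "\<dots> = n ^ ((ch I div 2 - 1) + (ch Ou div 2 - 1))" by (simp add: power_add)
            also have "\<dots> \<le> n ^ (f - 1)" using ex n1 by (simp add: power_increasing)
            finally show ?thesis unfolding T_def using kV kp by simp
          qed
        qed
      qed
      have cV: "card V \<le> f"
      proof -
        have "2 * card V + 2 \<le> ch w"
        proof (rule count_V[of w x p y V])
          show "w!0 = x" by (simp add: x_def)
          show "p < length w" "1 \<le> p" "w!p = y" "x \<noteq> y" using pl p1 y_def xy N_def by auto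
          show "\<And>i. i < p \<Longrightarrow> w!i = x" by (rule pre)
          show "count_list w x = count_list w y" using balw yx by simp
          show "V \<subseteq> {k. p < k \<and> k < length w \<and> w!k = x \<and> count_list (inner w p k) x = count_list (inner w p k) y}"
            unfolding V_def N_def using NC2_bal' by blast
        qed
        then show ?thesis unfolding f_def by simp
      qed
      have VK: "V \<subseteq> K" unfolding V_def K_def by auto
      have pK: "p - 1 \<in> K" unfolding K_def using pl p1 by auto
      have finK: "finite K" unfolding K_def by simp
      have "card (NC2 w) \<le> card (\<Union>k\<in>K. A k)"
        by (rule card_mono[OF _ cover]) (use finK finA in auto)
      also have "\<dots> \<le> (\<Sum>k\<in>K. card (A k))" by (rule card_UN_le[OF finK])
      also have "\<dots> \<le> (\<Sum>k\<in>K. T k)" by (rule sum_mono) (rule Tk)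
      also have "\<dots> = n ^ f + card V * n ^ (f - 1)"
      proof -
        have 1: "(\<Sum>k\<in>K. if k = p - 1 then n ^ f else 0) = n ^ f" using pK finK by simp
        have "(\<Sum>k\<in>K. if k \<in> V then n ^ (f - 1) else 0) = (\<Sum>k\<in>K \<inter> V. n ^ (f - 1))"
          by (rule sum.inter_restrict[symmetric]) (rule finK)
        also have "K \<inter> V = V" using VK by blast
        finally have 2: "(\<Sum>k\<in>K. if k \<in> V then n ^ (f - 1) else 0) = card V * n ^ (f - 1)" by simp
        show ?thesis unfolding T_def sum.distrib 1 2 ..
      qed
      also have "\<dots> \<le> n ^ f + f * n ^ (f - 1)" using cV by simp
      also have "\<dots> \<le> (n + 1) ^ f" by (rule pow_ineq)
      finally show ?thesis unfolding f_def n_def N_def .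
    qed
  qed
qed

lemma run_string_Cons: "run_string (a # ns) (b # ms) = (replicate a True @ replicate b False) @ run_string ns ms"
  unfolding run_string_def by simp

lemma run_len: "length ns = length ms \<Longrightarrow> length (run_string ns ms) = sum_list ns + sum_list ms"
proof (induction ns arbitrary: ms)
  case Nil then show ?case by (simp add: run_string_def)
next
  case (Cons a ns)
  then obtain b ms' where "ms = b # ms'" by (cases ms) auto
  then show ?case using Cons by (simp add: run_string_Cons)
qed

lemma run_lc: "length ns = length ms \<Longrightarrow> lc (run_string ns ms) \<le> 2 * length ns"
proof (induction ns arbitrary: ms)
  case Nil then show ?case by (simp add: run_string_def)
next
  case (Cons a ns)
  then obtain b ms' where ms: "ms = b # ms'" by (cases ms) auto
  have "lc (replicate a True @ replicate b False) \<le> 1" by (simp add: lc_append)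
  moreover have "lc (run_string ns ms') \<le> 2 * length ns" using Cons ms by simp
  ultimately show ?case unfolding ms run_string_Cons lc_append[of "replicate a True @ replicate b False"]
    by auto
qed

lemma fact_le: "fact (Suc m) \<le> (Suc m :: nat) ^ m"
proof (induction m)
  case 0 then show ?case by simp
next
  case (Suc m)
  have "fact (Suc (Suc m)) = Suc (Suc m) * fact (Suc m)" by simp
  also have "\<dots> \<le> Suc (Suc m) * (Suc m) ^ m" by (rule mult_le_mono2[OF Suc.IH])
  also have "\<dots> \<le> Suc (Suc m) * (Suc (Suc m)) ^ m" by (intro mult_le_mono power_mono) auto
  finally show ?case by simp
qed

theorem corollary3p6:
  fixes ns ms :: "nat list" and r n :: nat
  assumes "length ns = r" and "length ms = r" and "r \<ge> 1"
    and "\<forall>x \<in> set ns. x \<ge> 1" and "\<forall>x \<in> set ms. x \<ge> 1"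
    and "sum_list ns = n" and "sum_list ms = n"
  shows "real (card (NC2 (run_string ns ms)))
           \<le> real r ^ (r - 1) / fact r * (1 + real n) ^ (r - 1)"
proof -
  define S where "S = run_string ns ms"
  have len: "length S = 2 * n" using run_len[of ns ms] assms unfolding S_def by simp
  have "ch S \<le> 2 * r + 1" using run_lc[of ns ms] assms unfolding S_def ch_def by auto
  then have e: "ch S div 2 - 1 \<le> r - 1" by linarith
  have "card (NC2 S) \<le> (n + 1) ^ (ch S div 2 - 1)" using main[of S] len by simp
  also have "\<dots> \<le> (n + 1) ^ (r - 1)" using e by (intro power_increasing) auto
  finally have c: "real (card (NC2 S)) \<le> (1 + real n) ^ (r - 1)"
    by (metis (mono_tags, lifting) add.commute of_nat_1 of_nat_add of_nat_le_iff of_nat_power)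
  obtain m where m: "r = Suc m" using assms by (cases r) auto
  have "fact r \<le> r ^ (r - 1)" using fact_le[of m] m by simp
  then have fr: "(fact r :: real) \<le> real r ^ (r - 1)" by (metis of_nat_fact of_nat_le_iff of_nat_power)
  have fp: "(fact r :: real) > 0" by simp
  have one: "1 \<le> real r ^ (r - 1) / fact r" using fr fp by simp
  have "(1 + real n) ^ (r - 1) \<le> real r ^ (r - 1) / fact r * (1 + real n) ^ (r - 1)"
    using mult_right_mono[OF one, of "(1 + real n) ^ (r - 1)"] by simp
  then show ?thesis using c unfolding S_def by linarith
qed

end
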